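(* In the setting below, for every $m\in\mathbb N$ with $1\le m\le nN$, $$\mathbb P(X_m\ge1)\ge\min\Big\{\frac{m}{2N},\frac{1}{2C_G}\Big\}\,\mathbb P(X_{\ell N}\ge1),$$ and for all $k,m\in\mathbb N$ with $2kN\le m\le nN$, $$\mathbb P(X_m\ge k)\ge\frac{\mathbb P(X_{\ell N}\ge k)}{2+4C_G}.$$
   Context: Let $n,N\in\mathbb N$, $I=\{1,\dots,n\}$, $J=\{1,\dots,N\}$, $G$ a nonempty finite set of maps $I\to J$, $\mathbb P$ the normalized counting measure on $G$ ($\mathbb P(E)=|E|/|G|$) and $\mathbb E$ its expectation. Assume there is a constant $C_G\ge1$ such that for all $i\in I,j\in J$, $\mathbb P(g(i)=j)=1/N$, and for all pairs $(i_1,j_1)\ne(i_2,j_2)$ in $I\times J$, $\mathbb P(g(i_1)=j_1,g(i_2)=j_2)\le C_G/N^2$. Fix an integer $1\le\ell\le n$ and a matrix $a\in\mathbb R^{n\times N}$ with non-negative entries, and let $h:\{1,\dots,nN\}\to I\times J$ be a bijection with $a(h(j))\ge a(h(j+1))$ for $1\le j<\ell N$ and $a(h(j))=0$ for $\ell N<j\le nN$ (here $a(i,j)=a_{ij}$). Identify each $g\in G$ with its graph $\{(i,g(i)):i\in I\}$. For $1\le j\le nN$ let $Y_j(g)=1$ if $h(j)\in g$ and $Y_j(g)=0$ otherwise, and for $1\le m\le nN$ let $X_m(g)=\sum_{j=1}^mY_j(g)=|h(\{1,\dots,m\})\cap g|$. *)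

theory Defs
  imports "HOL-Library.FuncSet" Complex_Main
begin

definition Pr :: "(nat \<Rightarrow> nat) set \<Rightarrow> ((nat \<Rightarrow> nat) \<Rightarrow> bool) \<Rightarrow> real" where
  "Pr G E = real (card {g \<in> G. E g}) / real (card G)"

definition graph_on :: "nat \<Rightarrow> (nat \<Rightarrow> nat) \<Rightarrow> (nat \<times> nat) set" where
  "graph_on n g = {(i, g i) | i. i \<in> {1..n}}"

definition Xcnt :: "nat \<Rightarrow> (nat \<Rightarrow> nat \<times> nat) \<Rightarrow> nat \<Rightarrow> (nat \<Rightarrow> nat) \<Rightarrow> nat" where
  "Xcnt n h m g = card (h ` {1..m} \<inter> graph_on n g)"

end

theory Submission
  imports Defs "HOL-Analysis.Convex"
begin

lemma card_filter_sum:
  assumes "finite A"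
  shows "real (card {x\<in>A. Q x}) = (\<Sum>x\<in>A. if Q x then 1 else 0)"
  using assms by (simp add: sum.If_cases Int_def)

lemma Pr_le1: "finite G \<Longrightarrow> Pr G E \<le> 1"
proof -
  assume f: "finite G"
  have "card {g\<in>G. E g} \<le> card G" using f by (intro card_mono) auto
  then show ?thesis unfolding Pr_def by (cases "card G = 0") (auto simp: divide_le_eq_1)
qed

lemma Pr_ge0: "Pr G E \<ge> 0"
  unfolding Pr_def by simp

lemma pz:
  fixes f :: "'g \<Rightarrow> real" and t :: real
  assumes fin: "finite G" and nn: "\<And>g. g\<in>G \<Longrightarrow> f g \<ge> 0" and t: "t \<ge> 0"
    and ge: "t * card G \<le> sum f G"
  shows "(sum f G - t * card G)^2 \<le> card {g\<in>G. f g > t} * (\<Sum>g\<in>G. (f g)^2)"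
proof -
  let ?A = "{g\<in>G. f g > t}"
  have sp: "sum f G = sum f (G - ?A) + sum f ?A"
    using fin by (intro sum.subset_diff) auto
  have "sum f (G - ?A) \<le> sum (\<lambda>_. t) (G - ?A)" by (rule sum_mono) auto
  also have "\<dots> = t * card (G - ?A)" by simp
  also have "\<dots> \<le> t * card G" using t fin by (intro mult_left_mono) (auto intro: card_mono)
  finally have 1: "sum f G - t * card G \<le> sum f ?A" using sp by linarith
  have "(sum f G - t * card G)^2 \<le> (sum f ?A)^2"
    using 1 ge by (intro power_mono) auto
  also have "\<dots> \<le> (\<Sum>g\<in>?A. (f g)^2) * card ?A" by (rule sum_squared_le_sum_of_squares)
  also have "\<dots> \<le> (\<Sum>g\<in>G. (f g)^2) * card ?A"
    using fin by (intro mult_right_mono sum_mono2) auto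
  finally show ?thesis by (simp add: mult.commute)
qed

lemma moments:
  fixes G :: "(nat \<Rightarrow> nat) set" and P :: "(nat \<times> nat) set" and C :: real
  assumes fin: "finite G" and ne: "G \<noteq> {}" and Psub: "P \<subseteq> {1..n} \<times> {1..N}" and N: "N \<ge> 1"
    and C: "C \<ge> 1"
    and marg: "\<And>i j. i \<in> {1..n} \<Longrightarrow> j \<in> {1..N} \<Longrightarrow> Pr G (\<lambda>g. g i = j) = 1 / real N"
    and pair: "\<And>i1 j1 i2 j2. i1 \<in> {1..n} \<Longrightarrow> j1 \<in> {1..N} \<Longrightarrow> i2 \<in> {1..n} \<Longrightarrow> j2 \<in> {1..N}
       \<Longrightarrow> (i1, j1) \<noteq> (i2, j2) \<Longrightarrow> Pr G (\<lambda>g. g i1 = j1 \<and> g i2 = j2) \<le> C / real N ^ 2"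
  shows "(\<Sum>g\<in>G. real (card {p\<in>P. g (fst p) = snd p})) = real (card P) * card G / N"
    and "(\<Sum>g\<in>G. (real (card {p\<in>P. g (fst p) = snd p}))^2)
          \<le> (card P / N + C * (card P / N)^2) * card G"
proof -
  have finP: "finite P" using Psub finite_subset by blast
  define K where "K = real (card G)"
  have K: "K > 0" using fin ne by (simp add: K_def card_gt_0_iff)
  define ind where "ind p g = (if g (fst p) = snd p then 1 else (0::real))" for p :: "nat \<times> nat" and g :: "nat \<Rightarrow> nat"
  have Y: "real (card {p\<in>P. g (fst p) = snd p}) = (\<Sum>p\<in>P. ind p g)" for g
    unfolding ind_def by (rule card_filter_sum[OF finP])
  have m1: "(\<Sum>g\<in>G. ind p g) = K / N" if pP: "p \<in> P" for p
  proof -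
    obtain i j where p: "p = (i,j)" "i \<in> {1..n}" "j \<in> {1..N}" using pP Psub by (cases p) auto
    have "(\<Sum>g\<in>G. ind p g) = real (card {g\<in>G. g i = j})"
      unfolding ind_def p by (simp add: card_filter_sum[OF fin])
    also have "\<dots> = K / N" using marg[OF p(2,3)] K unfolding Pr_def K_def
      by (simp add: field_simps)
    finally show ?thesis .
  qed
  have "(\<Sum>g\<in>G. real (card {p\<in>P. g (fst p) = snd p})) = (\<Sum>p\<in>P. \<Sum>g\<in>G. ind p g)"
    unfolding Y by (rule sum.swap)
  also have "\<dots> = (\<Sum>p\<in>P. K / N)" using m1 by simp
  finally show "(\<Sum>g\<in>G. real (card {p\<in>P. g (fst p) = snd p})) = real (card P) * card G / N"
    by (simp add: K_def)
  have m2: "(\<Sum>g\<in>G. ind p g * ind q g) \<le> (if q = p then K / N else 0) + C * K / N^2"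
    if pq: "p \<in> P" "q \<in> P" for p q
  proof (cases "q = p")
    case True
    have e: "ind p g * ind p g = ind p g" for g unfolding ind_def by simp
    have "0 \<le> C * K / N^2" using C K by simp
    then show ?thesis using True m1[OF pq(1)] by (simp add: e)
  next
    case False
    obtain i j where p: "p = (i,j)" "i \<in> {1..n}" "j \<in> {1..N}" using pq Psub by (cases p) auto
    obtain i2 j2 where q: "q = (i2,j2)" "i2 \<in> {1..n}" "j2 \<in> {1..N}" using pq Psub by (cases q) auto
    have ne: "(i,j) \<noteq> (i2,j2)" using False p q by auto
    have "(\<Sum>g\<in>G. ind p g * ind q g) = real (card {g\<in>G. g i = j \<and> g i2 = j2})"
      unfolding ind_def p q by (auto simp add: card_filter_sum[OF fin] intro!: sum.cong)
    also have "\<dots> \<le> C * K / N^2" using pair[OF p(2,3) q(2,3) ne] K unfolding Pr_def K_def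
      by (simp add: field_simps)
    finally show ?thesis using False by simp
  qed
  have "(\<Sum>g\<in>G. (real (card {p\<in>P. g (fst p) = snd p}))^2)
      = (\<Sum>g\<in>G. \<Sum>p\<in>P. \<Sum>q\<in>P. ind p g * ind q g)"
    unfolding Y power2_eq_square sum_product ..
  also have "\<dots> = (\<Sum>p\<in>P. \<Sum>q\<in>P. \<Sum>g\<in>G. ind p g * ind q g)"
    by (simp add: sum.swap[of _ G] sum.swap[of _ G P])
  also have "\<dots> \<le> (\<Sum>p\<in>P. \<Sum>q\<in>P. (if q = p then K / N else 0) + C * K / N^2)"
    using m2 by (intro sum_mono) auto
  also have "\<dots> = (\<Sum>p\<in>P. K / N + card P * (C * K / N^2))"
    using finP by (simp add: sum.distrib)
  also have "\<dots> = (card P / N + C * (card P / N)^2) * card G"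
    by (simp add: K_def field_simps power2_eq_square)
  finally show "(\<Sum>g\<in>G. (real (card {p\<in>P. g (fst p) = snd p}))^2)
          \<le> (card P / N + C * (card P / N)^2) * card G" .
qed


lemma fin1:
  fixes \<mu> C K c p :: real
  assumes mu: "\<mu> > 0" and C: "C \<ge> 1" and K: "K > 0" and c: "c \<ge> 0"
    and h: "(\<mu> * K)^2 \<le> c * ((\<mu> + C * \<mu>^2) * K)" and p: "0 \<le> p" "p \<le> 1"
  shows "min (\<mu>/2) (1/(2*C)) * p \<le> c / K"
proof -
  have "(\<mu> * K) * (\<mu> * K) \<le> (c * (1 + C * \<mu>)) * (\<mu> * K)"
    using h by (simp add: power2_eq_square algebra_simps)
  then have 1: "\<mu> * K \<le> c * (1 + C * \<mu>)" using mu K by simp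
  have pos: "1 + C * \<mu> > 0" using mu C by (simp add: add_pos_nonneg)
  have 2: "\<mu> / (1 + C * \<mu>) \<le> c / K" using 1 pos K by (simp add: field_simps)
  have 3: "min (\<mu>/2) (1/(2*C)) \<le> \<mu> / (1 + C * \<mu>)"
  proof (cases "C * \<mu> \<le> 1")
    case True
    then have "\<mu>/2 \<le> \<mu> / (1 + C * \<mu>)" using mu pos by (simp add: field_simps)
    then show ?thesis by linarith
  next
    case False
    then have "1/(2*C) \<le> \<mu> / (1 + C * \<mu>)" using mu pos C by (simp add: field_simps)
    then show ?thesis by linarith
  qed
  have "min (\<mu>/2) (1/(2*C)) * p \<le> min (\<mu>/2) (1/(2*C))"
    using p mu C by (intro mult_left_le) auto
  then show ?thesis using 2 3 by linarith
qed

lemma fin2: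
  fixes \<mu> C K c p :: real
  assumes mu: "\<mu> \<ge> 2" and C: "C \<ge> 1" and K: "K > 0" and c: "c \<ge> 0"
    and h: "(\<mu> * K - \<mu> / 2 * K)^2 \<le> c * ((\<mu> + C * \<mu>^2) * K)" and p: "0 \<le> p" "p \<le> 1"
  shows "p / (2 + 4 * C) \<le> c / K"
proof -
  have "(\<mu> * K) * (\<mu> * K) \<le> (4 * c * (1 + C * \<mu>)) * (\<mu> * K)"
    using h by (simp add: power2_eq_square algebra_simps)
  then have 1: "\<mu> * K \<le> 4 * c * (1 + C * \<mu>)" using mu K by simp
  have pos: "1 + C * \<mu> > 0" using mu C by (simp add: add_pos_nonneg)
  have 2: "\<mu> / (4 * (1 + C * \<mu>)) \<le> c / K" using 1 pos K by (simp add: field_simps)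
  have 3: "1 / (2 + 4 * C) \<le> \<mu> / (4 * (1 + C * \<mu>))" using mu pos C by (simp add: field_simps)
  have "p / (2 + 4 * C) \<le> 1 / (2 + 4 * C)" using p C by (intro divide_right_mono) auto
  then show ?thesis using 2 3 by linarith
qed

theorem lemma3p3:
  fixes n N ell :: nat and G :: "(nat \<Rightarrow> nat) set" and C :: real
    and a :: "nat \<Rightarrow> nat \<Rightarrow> real" and h :: "nat \<Rightarrow> nat \<times> nat"
  assumes "n \<ge> 1" and "N \<ge> 1"
    and G_sub: "G \<subseteq> {1..n} \<rightarrow>\<^sub>E {1..N}"
    and G_fin: "finite G" and G_ne: "G \<noteq> {}"
    and C_ge: "C \<ge> 1"
    and marg: "\<And>i j. i \<in> {1..n} \<Longrightarrow> j \<in> {1..N} \<Longrightarrow> Pr G (\<lambda>g. g i = j) = 1 / real N"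
    and pair: "\<And>i1 j1 i2 j2. i1 \<in> {1..n} \<Longrightarrow> j1 \<in> {1..N} \<Longrightarrow> i2 \<in> {1..n} \<Longrightarrow> j2 \<in> {1..N}
       \<Longrightarrow> (i1, j1) \<noteq> (i2, j2) \<Longrightarrow> Pr G (\<lambda>g. g i1 = j1 \<and> g i2 = j2) \<le> C / real N ^ 2"
    and l: "1 \<le> ell" "ell \<le> n"
    and a_nonneg: "\<And>i j. i \<in> {1..n} \<Longrightarrow> j \<in> {1..N} \<Longrightarrow> a i j \<ge> 0"
    and h_bij: "bij_betw h {1..n * N} ({1..n} \<times> {1..N})"
    and h_mono: "\<And>j. 1 \<le> j \<Longrightarrow> j < ell * N \<Longrightarrow> case_prod a (h j) \<ge> case_prod a (h (j + 1))"
    and h_zero: "\<And>j. ell * N < j \<Longrightarrow> j \<le> n * N \<Longrightarrow> case_prod a (h j) = 0"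
  shows "(\<forall>m. 1 \<le> m \<and> m \<le> n * N \<longrightarrow>
            Pr G (\<lambda>g. Xcnt n h m g \<ge> 1)
              \<ge> min (real m / (2 * real N)) (1 / (2 * C)) * Pr G (\<lambda>g. Xcnt n h (ell * N) g \<ge> 1))
       \<and> (\<forall>k m. 2 * k * N \<le> m \<and> m \<le> n * N \<longrightarrow>
            Pr G (\<lambda>g. Xcnt n h m g \<ge> k) \<ge> Pr G (\<lambda>g. Xcnt n h (ell * N) g \<ge> k) / (2 + 4 * C))"
proof -
  have hsub: "h ` {1..n*N} \<subseteq> {1..n} \<times> {1..N}" using h_bij bij_betw_imp_surj_on by blast
  have hinj: "inj_on h {1..n*N}" using h_bij bij_betw_imp_inj_on by blast
  have X: "Xcnt n h m g = card {p \<in> h`{1..m}. g (fst p) = snd p}" if "m \<le> n*N" for m g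
  proof -
    have "h`{1..m} \<subseteq> h`{1..n*N}" using that by (intro image_mono) auto
    then have s: "h`{1..m} \<subseteq> {1..n} \<times> {1..N}" using hsub by blast
    have "h ` {1..m} \<inter> graph_on n g = {p \<in> h`{1..m}. g (fst p) = snd p}"
      unfolding graph_on_def using s by force
    then show ?thesis unfolding Xcnt_def by simp
  qed
  have cardP: "card (h`{1..m}) = m" if "m \<le> n*N" for m
  proof -
    have "inj_on h {1..m}" using that by (intro inj_on_subset[OF hinj]) auto
    then show ?thesis by (simp add: card_image)
  qed
  have K: "real (card G) > 0" using G_fin G_ne by (simp add: card_gt_0_iff)
  have mom: "(\<Sum>g\<in>G. real (Xcnt n h m g)) = (real m / N) * card G \<and>
     (\<Sum>g\<in>G. (real (Xcnt n h m g))^2) \<le> (real m / N + C * (real m / N)^2) * card G"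
    if "m \<le> n*N" for m
  proof -
    have "h`{1..m} \<subseteq> h`{1..n*N}" using that by (intro image_mono) auto
    then have s: "h`{1..m} \<subseteq> {1..n} \<times> {1..N}" using hsub by blast
    note M = moments[OF G_fin G_ne s \<open>N \<ge> 1\<close> C_ge marg pair]
    show ?thesis using M cardP[OF that] X[OF that] by simp
  qed
  have P1: "Pr G (\<lambda>g. Xcnt n h m g \<ge> 1)
              \<ge> min (real m / (2 * real N)) (1 / (2 * C)) * Pr G (\<lambda>g. Xcnt n h (ell * N) g \<ge> 1)"
    if m: "1 \<le> m" "m \<le> n * N" for m
  proof -
    define f where "f g = real (Xcnt n h m g)" for g
    define \<mu> where "\<mu> = real m / N"
    have mu: "\<mu> > 0" using m \<open>N \<ge> 1\<close> by (simp add: \<mu>_def)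
    have S1: "sum f G = \<mu> * card G" and S2: "(\<Sum>g\<in>G. (f g)^2) \<le> (\<mu> + C * \<mu>^2) * card G"
      using mom[OF m(2)] by (simp_all add: f_def \<mu>_def)
    have "(sum f G - (0::real) * card G)^2 \<le> card {g\<in>G. f g > 0} * (\<Sum>g\<in>G. (f g)^2)"
      using G_fin by (intro pz) (auto simp: f_def intro: sum_nonneg)
    also have "\<dots> \<le> card {g\<in>G. f g > 0} * ((\<mu> + C * \<mu>^2) * card G)"
      using S2 by (intro mult_left_mono) auto
    also have "{g\<in>G. f g > 0} = {g\<in>G. Xcnt n h m g \<ge> 1}" by (auto simp: f_def)
    finally have h: "(\<mu> * card G)^2 \<le> card {g\<in>G. Xcnt n h m g \<ge> 1} * ((\<mu> + C * \<mu>^2) * card G)"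
      by (simp add: S1)
    have "min (\<mu>/2) (1/(2*C)) * Pr G (\<lambda>g. Xcnt n h (ell * N) g \<ge> 1)
         \<le> card {g\<in>G. Xcnt n h m g \<ge> 1} / card G"
      by (rule fin1[OF mu C_ge K _ h Pr_ge0 Pr_le1[OF G_fin]]) simp
    moreover have "\<mu>/2 = real m / (2 * real N)" by (simp add: \<mu>_def)
    ultimately show ?thesis by (simp add: Pr_def)
  qed
  have P2: "Pr G (\<lambda>g. Xcnt n h m g \<ge> k) \<ge> Pr G (\<lambda>g. Xcnt n h (ell * N) g \<ge> k) / (2 + 4 * C)"
    if km: "2 * k * N \<le> m" "m \<le> n * N" for k m
  proof (cases "k = 0")
    case True
    have "Pr G (\<lambda>g. Xcnt n h m g \<ge> k) = 1" using True K by (simp add: Pr_def)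
    moreover have "Pr G (\<lambda>g. Xcnt n h (ell * N) g \<ge> k) / (2 + 4 * C) \<le> 1"
      using Pr_le1[OF G_fin] Pr_ge0 C_ge
      by (smt (verit, ccfv_SIG) divide_le_eq_1)
    ultimately show ?thesis by simp
  next
    case False
    define f where "f g = real (Xcnt n h m g)" for g
    define \<mu> where "\<mu> = real m / N"
    have "real (2 * k * N) \<le> real m" using km by linarith
    then have "2 * real k * N \<le> real m" by simp
    then have muk: "\<mu> \<ge> 2 * k" using \<open>N \<ge> 1\<close> by (simp add: \<mu>_def field_simps)
    have mu: "\<mu> \<ge> 2" using muk False by simp
    have S1: "sum f G = \<mu> * card G" and S2: "(\<Sum>g\<in>G. (f g)^2) \<le> (\<mu> + C * \<mu>^2) * card G"
      using mom[OF km(2)] by (simp_all add: f_def \<mu>_def)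
    have "(sum f G - \<mu>/2 * card G)^2 \<le> card {g\<in>G. f g > \<mu>/2} * (\<Sum>g\<in>G. (f g)^2)"
    proof (rule pz[OF G_fin])
      show "\<And>g. g \<in> G \<Longrightarrow> 0 \<le> f g" by (simp add: f_def)
      show "0 \<le> \<mu>/2" using mu by simp
      show "\<mu>/2 * real (card G) \<le> sum f G" using mu K unfolding S1 by simp
    qed
    also have "\<dots> \<le> card {g\<in>G. f g > \<mu>/2} * ((\<mu> + C * \<mu>^2) * card G)"
      using S2 by (intro mult_left_mono) auto
    also have "\<dots> \<le> card {g\<in>G. Xcnt n h m g \<ge> k} * ((\<mu> + C * \<mu>^2) * card G)"
    proof (intro mult_right_mono)
      have "{g\<in>G. f g > \<mu>/2} \<subseteq> {g\<in>G. Xcnt n h m g \<ge> k}"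
      proof
        fix g assume "g \<in> {g\<in>G. f g > \<mu>/2}"
        then have "g \<in> G" "real (Xcnt n h m g) > real k" using muk by (auto simp: f_def)
        then show "g \<in> {g\<in>G. Xcnt n h m g \<ge> k}" by simp
      qed
      then show "real (card {g\<in>G. f g > \<mu>/2}) \<le> real (card {g\<in>G. Xcnt n h m g \<ge> k})"
        using G_fin by (simp add: card_mono)
      show "0 \<le> (\<mu> + C * \<mu>^2) * real (card G)" using mu C_ge by simp
    qed
    finally have h: "(\<mu> * card G - \<mu>/2 * card G)^2 \<le> card {g\<in>G. Xcnt n h m g \<ge> k} * ((\<mu> + C * \<mu>^2) * card G)"
      by (simp add: S1)
    have "Pr G (\<lambda>g. Xcnt n h (ell * N) g \<ge> k) / (2 + 4 * C)
         \<le> card {g\<in>G. Xcnt n h m g \<ge> k} / card G"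
      by (rule fin2[OF mu C_ge K _ h Pr_ge0 Pr_le1[OF G_fin]]) simp
    then show ?thesis by (simp add: Pr_def)
  qed
  show ?thesis using P1 P2 by blast
qed

end
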